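(* Let $N\ge1$. For every $0\le m\le N$, $G^m\subseteq F_{N-m}(N)$.
   Context: $\mathfrak g$ is a finite-dimensional simple complex Lie algebra, $\hat{\mathfrak g}$ its affine Kac–Moody algebra, $L$ the basic representation with highest weight vector $v_0$: $(\mathfrak g\otimes\mathbb C[t])v_0=0$. $e_\theta$ is a highest weight vector of the adjoint representation of $\mathfrak g$. PBW filtration: $F_{-1}=0$, $F_0=\mathbb Cv_0$, $F_{m+1}=F_m+\mathrm{span}\{(x\otimes t^{-i})w: x\in\mathfrak g,i>0,w\in F_m\}$. $v_N=(e_\theta\otimes t^{-N})^Nv_0$, $D(N)=U(\mathfrak g\otimes\mathbb C[t])v_N$, $F_m(N)=D(N)\cap F_m$. The $t^N$-filtration on $D(N)$: $\mathcal U^0=U(\mathfrak g\otimes\mathbb C[t])$, $\mathcal U^{j+1}=(\mathfrak g\otimes t^N\mathbb C[t])\,\mathcal U^j$, $G^j=\mathcal U^jv_N$. *)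

theory Defs
  imports Complex_Main
begin

text \<open>A complex vector space is given by its scalar multiplication sg (locale vector_space
  from HOL.Vector_Spaces); the Lie bracket is br.\<close>

definition lie_algebra :: "(complex \<Rightarrow> 'g::ab_group_add \<Rightarrow> 'g) \<Rightarrow> ('g \<Rightarrow> 'g \<Rightarrow> 'g) \<Rightarrow> bool" where
  "lie_algebra sg br \<longleftrightarrow>
     vector_space sg \<and>
     (\<forall>x y z. br (x + y) z = br x z + br y z) \<and>
     (\<forall>c x y. br (sg c x) y = sg c (br x y)) \<and>
     (\<forall>x. br x x = 0) \<and>
     (\<forall>x y z. br x (br y z) + br y (br z x) + br z (br x y) = 0)"

definition fin_dim :: "(complex \<Rightarrow> 'g::ab_group_add \<Rightarrow> 'g) \<Rightarrow> bool" where
  "fin_dim sg \<longleftrightarrow> (\<exists>Bs. finite Bs \<and> module.span sg Bs = UNIV)"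

definition lie_ideal :: "(complex \<Rightarrow> 'g::ab_group_add \<Rightarrow> 'g) \<Rightarrow> ('g \<Rightarrow> 'g \<Rightarrow> 'g) \<Rightarrow> 'g set \<Rightarrow> bool" where
  "lie_ideal sg br I \<longleftrightarrow> module.subspace sg I \<and> (\<forall>x y. y \<in> I \<longrightarrow> br x y \<in> I)"

definition simple_lie_algebra :: "(complex \<Rightarrow> 'g::ab_group_add \<Rightarrow> 'g) \<Rightarrow> ('g \<Rightarrow> 'g \<Rightarrow> 'g) \<Rightarrow> bool" where
  "simple_lie_algebra sg br \<longleftrightarrow>
     lie_algebra sg br \<and> fin_dim sg \<and> (\<exists>x y. br x y \<noteq> 0) \<and>
     (\<forall>I. lie_ideal sg br I \<longrightarrow> I = {0} \<or> I = UNIV)"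

definition lie_subalgebra :: "(complex \<Rightarrow> 'g::ab_group_add \<Rightarrow> 'g) \<Rightarrow> ('g \<Rightarrow> 'g \<Rightarrow> 'g) \<Rightarrow> 'g set \<Rightarrow> bool" where
  "lie_subalgebra sg br S \<longleftrightarrow> module.subspace sg S \<and> (\<forall>x\<in>S. \<forall>y\<in>S. br x y \<in> S)"

primrec derived_series :: "(complex \<Rightarrow> 'g::ab_group_add \<Rightarrow> 'g) \<Rightarrow> ('g \<Rightarrow> 'g \<Rightarrow> 'g) \<Rightarrow> 'g set \<Rightarrow> nat \<Rightarrow> 'g set" where
  "derived_series sg br S 0 = S"
| "derived_series sg br S (Suc k) =
     module.span sg {br x y | x y. x \<in> derived_series sg br S k \<and> y \<in> derived_series sg br S k}"

definition solvable_subalgebra :: "(complex \<Rightarrow> 'g::ab_group_add \<Rightarrow> 'g) \<Rightarrow> ('g \<Rightarrow> 'g \<Rightarrow> 'g) \<Rightarrow> 'g set \<Rightarrow> bool" where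
  "solvable_subalgebra sg br S \<longleftrightarrow> lie_subalgebra sg br S \<and> (\<exists>k. derived_series sg br S k = {0})"

definition borel_subalgebra :: "(complex \<Rightarrow> 'g::ab_group_add \<Rightarrow> 'g) \<Rightarrow> ('g \<Rightarrow> 'g \<Rightarrow> 'g) \<Rightarrow> 'g set \<Rightarrow> bool" where
  "borel_subalgebra sg br b \<longleftrightarrow> solvable_subalgebra sg br b \<and>
     (\<forall>S. solvable_subalgebra sg br S \<and> b \<subseteq> S \<longrightarrow> S = b)"

text \<open>A highest weight vector of the adjoint representation: a nonzero vector spanning a line
  stable under some Borel subalgebra (so e is a highest root vector e_theta).\<close>
definition highest_root_vector :: "(complex \<Rightarrow> 'g::ab_group_add \<Rightarrow> 'g) \<Rightarrow> ('g \<Rightarrow> 'g \<Rightarrow> 'g) \<Rightarrow> 'g \<Rightarrow> bool" where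
  "highest_root_vector sg br e \<longleftrightarrow> e \<noteq> 0 \<and>
     (\<exists>b. borel_subalgebra sg br b \<and> (\<forall>x\<in>b. \<exists>c. br x e = sg c e))"

text \<open>The normalized invariant form ( , ) with (theta,theta) = 2. Normalization is expressed via an
  sl2-triple (e_theta, f, h) through e_theta: then h is the coroot of theta and (theta,theta)=2 iff
  (e_theta, f) = 1.\<close>
definition normalized_form :: "(complex \<Rightarrow> 'g::ab_group_add \<Rightarrow> 'g) \<Rightarrow> ('g \<Rightarrow> 'g \<Rightarrow> 'g) \<Rightarrow> ('g \<Rightarrow> 'g \<Rightarrow> complex) \<Rightarrow> 'g \<Rightarrow> bool" where
  "normalized_form sg br B e \<longleftrightarrow>
     (\<forall>x y z. B (x + y) z = B x z + B y z) \<and>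
     (\<forall>c x y. B (sg c x) y = c * B x y) \<and>
     (\<forall>x y. B x y = B y x) \<and>
     (\<forall>x y z. B (br x y) z = B x (br y z)) \<and>
     (\<exists>f h. br e f = h \<and> br h e = sg 2 e \<and> br h f = sg (-2) f \<and> B e f = 1)"

text \<open>rho x i is the action of x \<otimes> t^i on the module (scalar multiplication sv); the central element
  K acts by 1, so the bracket
  [x\<otimes>t^i, y\<otimes>t^j] = [x,y]\<otimes>t^(i+j) + i \<delta>_{i+j,0} (x,y) K is imposed on operators.\<close>
definition level_one_module ::
  "(complex \<Rightarrow> 'g::ab_group_add \<Rightarrow> 'g) \<Rightarrow> ('g \<Rightarrow> 'g \<Rightarrow> 'g) \<Rightarrow> ('g \<Rightarrow> 'g \<Rightarrow> complex) \<Rightarrow>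
   (complex \<Rightarrow> 'v::ab_group_add \<Rightarrow> 'v) \<Rightarrow> ('g \<Rightarrow> int \<Rightarrow> 'v \<Rightarrow> 'v) \<Rightarrow> bool" where
  "level_one_module sg br B sv \<rho> \<longleftrightarrow>
     vector_space sv \<and>
     (\<forall>x i v w. \<rho> x i (v + w) = \<rho> x i v + \<rho> x i w) \<and>
     (\<forall>x i c v. \<rho> x i (sv c v) = sv c (\<rho> x i v)) \<and>
     (\<forall>x y i v. \<rho> (x + y) i v = \<rho> x i v + \<rho> y i v) \<and>
     (\<forall>c x i v. \<rho> (sg c x) i v = sv c (\<rho> x i v)) \<and>
     (\<forall>x y i j v. \<rho> x i (\<rho> y j v) - \<rho> y j (\<rho> x i v) =
        \<rho> (br x y) (i + j) v + (if i + j = 0 then sv (of_int i * B x y) v else 0))"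

text \<open>The basic representation: irreducible level one module generated by a nonzero vector v0
  annihilated by g \<otimes> C[t]. (This characterizes L(Lambda_0) up to isomorphism.)\<close>
definition basic_rep ::
  "(complex \<Rightarrow> 'g::ab_group_add \<Rightarrow> 'g) \<Rightarrow> ('g \<Rightarrow> 'g \<Rightarrow> 'g) \<Rightarrow> ('g \<Rightarrow> 'g \<Rightarrow> complex) \<Rightarrow>
   (complex \<Rightarrow> 'v::ab_group_add \<Rightarrow> 'v) \<Rightarrow> ('g \<Rightarrow> int \<Rightarrow> 'v \<Rightarrow> 'v) \<Rightarrow> 'v \<Rightarrow> bool" where
  "basic_rep sg br B sv \<rho> v0 \<longleftrightarrow>
     level_one_module sg br B sv \<rho> \<and> v0 \<noteq> 0 \<and>
     (\<forall>x i. 0 \<le> i \<longrightarrow> \<rho> x i v0 = 0) \<and>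
     (\<forall>W. module.subspace sv W \<and> (\<forall>x i w. w \<in> W \<longrightarrow> \<rho> x i w \<in> W) \<longrightarrow> W = {0} \<or> W = UNIV)"

primrec pbw_filt :: "(complex \<Rightarrow> 'v::ab_group_add \<Rightarrow> 'v) \<Rightarrow> ('g \<Rightarrow> int \<Rightarrow> 'v \<Rightarrow> 'v) \<Rightarrow> 'v \<Rightarrow> nat \<Rightarrow> 'v set" where
  "pbw_filt sv \<rho> v0 0 = module.span sv {v0}"
| "pbw_filt sv \<rho> v0 (Suc m) =
     module.span sv (pbw_filt sv \<rho> v0 m \<union> {\<rho> x (- i) w | x i w. 0 < i \<and> w \<in> pbw_filt sv \<rho> v0 m})"

definition vN :: "('g \<Rightarrow> int \<Rightarrow> 'v \<Rightarrow> 'v) \<Rightarrow> 'g \<Rightarrow> nat \<Rightarrow> 'v \<Rightarrow> 'v" where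
  "vN \<rho> e N v0 = (\<rho> e (- int N) ^^ N) v0"

text \<open>U(g \<otimes> C[t]) v : the smallest subspace containing v and stable under all x \<otimes> t^i, i \<ge> 0.\<close>
definition cyclic_pos :: "(complex \<Rightarrow> 'v::ab_group_add \<Rightarrow> 'v) \<Rightarrow> ('g \<Rightarrow> int \<Rightarrow> 'v \<Rightarrow> 'v) \<Rightarrow> 'v \<Rightarrow> 'v set" where
  "cyclic_pos sv \<rho> v = \<Inter>{W. module.subspace sv W \<and> v \<in> W \<and>
       (\<forall>x i w. 0 \<le> i \<and> w \<in> W \<longrightarrow> \<rho> x i w \<in> W)}"

text \<open>t^N-filtration: G^0 = U(g\<otimes>C[t]) v, G^(j+1) = (g \<otimes> t^N C[t]) U^j v
  = span{(x\<otimes>t^i) w : i \<ge> N, w \<in> G^j}.\<close>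
primrec tN_filt :: "(complex \<Rightarrow> 'v::ab_group_add \<Rightarrow> 'v) \<Rightarrow> ('g \<Rightarrow> int \<Rightarrow> 'v \<Rightarrow> 'v) \<Rightarrow> nat \<Rightarrow> 'v \<Rightarrow> nat \<Rightarrow> 'v set" where
  "tN_filt sv \<rho> N v 0 = cyclic_pos sv \<rho> v"
| "tN_filt sv \<rho> N v (Suc j) =
     module.span sv {\<rho> x i w | x i w. int N \<le> i \<and> w \<in> tN_filt sv \<rho> N v j}"

end

theory Submission
  imports Defs
begin

primrec Hf :: "(complex \<Rightarrow> 'v::ab_group_add \<Rightarrow> 'v) \<Rightarrow> ('g \<Rightarrow> int \<Rightarrow> 'v \<Rightarrow> 'v) \<Rightarrow> nat \<Rightarrow> 'v \<Rightarrow> nat \<Rightarrow> 'v set" where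
  "Hf sv \<rho> N v0 0 = module.span sv {v0}"
| "Hf sv \<rho> N v0 (Suc k) =
     module.span sv (Hf sv \<rho> N v0 k \<union> {\<rho> x (- j) w | x j w. 0 < j \<and> j \<le> int N \<and> w \<in> Hf sv \<rho> N v0 k})"

locale lvl = vector_space sv for sv :: "complex \<Rightarrow> 'v::ab_group_add \<Rightarrow> 'v" +
  fixes \<rho> :: "'g \<Rightarrow> int \<Rightarrow> 'v \<Rightarrow> 'v" and br :: "'g \<Rightarrow> 'g \<Rightarrow> 'g" and B :: "'g \<Rightarrow> 'g \<Rightarrow> complex"
    and v0 :: 'v and N :: nat
  assumes radd: "\<rho> x i (v + w) = \<rho> x i v + \<rho> x i w"
    and rsc: "\<rho> x i (sv c v) = sv c (\<rho> x i v)"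
    and comm: "\<rho> x i (\<rho> y j v) - \<rho> y j (\<rho> x i v) =
        \<rho> (br x y) (i + j) v + (if i + j = 0 then sv (of_int i * B x y) v else 0)"
    and ann: "0 \<le> i \<Longrightarrow> \<rho> x i v0 = 0"
    and N1: "1 \<le> N"
begin

abbreviation "H \<equiv> Hf sv \<rho> N v0"

lemma r0: "\<rho> x i 0 = 0"
  using radd[of x i 0 0] by simp

lemma comm': "\<rho> x i (\<rho> y j v) = \<rho> y j (\<rho> x i v) +
        \<rho> (br x y) (i + j) v + (if i + j = 0 then sv (of_int i * B x y) v else 0)"
  using comm[of x i y j v] by (simp add: algebra_simps)

lemma lin_pre:
  assumes T: "subspace T" and S: "\<And>s. s \<in> S \<Longrightarrow> \<rho> x i s \<in> T" and v: "v \<in> span S"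
  shows "\<rho> x i v \<in> T"
proof -
  have "subspace {v. \<rho> x i v \<in> T}"
    by (rule subspaceI) (auto simp: r0 radd rsc T subspace_0 subspace_add subspace_scale)
  hence "span S \<subseteq> {v. \<rho> x i v \<in> T}" using S by (intro span_minimal) auto
  thus ?thesis using v by auto
qed

lemma H_sub [simp]: "subspace (H k)"
  by (cases k) auto

lemma H_SucD: "w \<in> H (Suc k) \<Longrightarrow> w \<in> span (H k \<union> {\<rho> x (- j) w | x j w. 0 < j \<and> j \<le> int N \<and> w \<in> H k})"
  by simp

lemma H_mono: "H k \<subseteq> H (Suc k)"
  by (auto intro: span_base)

lemma H_gen: "0 < j \<Longrightarrow> j \<le> int N \<Longrightarrow> w \<in> H k \<Longrightarrow> \<rho> y (- j) w \<in> H (Suc k)"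
  by (auto intro!: span_base)

lemma H0: "w \<in> H 0 \<Longrightarrow> 0 \<le> i \<Longrightarrow> \<rho> x i w = 0"
proof -
  assume w: "w \<in> H 0" and i: "0 \<le> i"
  have "\<rho> x i w \<in> {0}"
    by (rule lin_pre[of "{0}" "{v0}"]) (use w i ann in auto)
  thus ?thesis by simp
qed

lemma A: "0 \<le> i \<Longrightarrow> w \<in> H k \<Longrightarrow> \<rho> x i w \<in> H k"
proof (induction k arbitrary: x i w)
  case 0
  then show ?case using H0[of w i x] by (simp add: span_zero)
next
  case (Suc k)
  show ?case
  proof (rule lin_pre[OF H_sub _ H_SucD[OF Suc.prems(2)]])
    fix s assume "s \<in> H k \<union> {\<rho> x (- j) w | x j w. 0 < j \<and> j \<le> int N \<and> w \<in> H k}"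
    then consider "s \<in> H k" | y j w where "s = \<rho> y (- j) w" "0 < j" "j \<le> int N" "w \<in> H k"
      by blast
    then show "\<rho> x i s \<in> H (Suc k)"
    proof cases
      case 1 then show ?thesis using Suc.IH[OF Suc.prems(1)] H_mono by blast
    next
      case 2
      have t1: "\<rho> y (- j) (\<rho> x i w) \<in> H (Suc k)"
        using H_gen 2 Suc.IH[OF Suc.prems(1)] by blast
      have t2: "\<rho> (br x y) (i + - j) w \<in> H (Suc k)"
      proof (cases "0 \<le> i + - j")
        case True then show ?thesis using Suc.IH 2 H_mono by blast
      next
        case False
        have "\<rho> (br x y) (- (j - i)) w \<in> H (Suc k)"
          using H_gen[of "j - i" w k] 2 False Suc.prems(1) by auto
        then show ?thesis by simp
      qed
      have t3: "(if i + - j = 0 then sv (of_int i * B x y) w else 0) \<in> H (Suc k)"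
      proof -
        have "w \<in> H (Suc k)" using 2 H_mono by blast
        thus ?thesis using subspace_scale[OF H_sub] subspace_0[OF H_sub] by (simp del: Hf.simps)
      qed
      have eq: "\<rho> x i s = \<rho> y (- j) (\<rho> x i w) + \<rho> (br x y) (i + - j) w
          + (if i + - j = 0 then sv (of_int i * B x y) w else 0)"
        unfolding 2 by (rule comm')
      show ?thesis unfolding eq
        by (intro subspace_add H_sub t1 t2 t3)
    qed
  qed
qed

lemma Bl: "int N \<le> i \<Longrightarrow> w \<in> H (Suc k) \<Longrightarrow> \<rho> x i w \<in> H k"
proof (induction k arbitrary: x i w)
  case k: (0)
  have i: "0 \<le> i" using k N1 by simp
  show ?case
  proof (rule lin_pre[OF H_sub _ H_SucD[OF k.prems(2)]])
    fix s assume "s \<in> H 0 \<union> {\<rho> x (- j) w | x j w. 0 < j \<and> j \<le> int N \<and> w \<in> H 0}"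
    then consider "s \<in> H 0" | y j w where "s = \<rho> y (- j) w" "0 < j" "j \<le> int N" "w \<in> H 0"
      by blast
    then show "\<rho> x i s \<in> H 0"
    proof cases
      case 1 then show ?thesis using A i by blast
    next
      case 2
      have t1: "\<rho> y (- j) (\<rho> x i w) \<in> H 0"
        using H0[OF 2(4) i] r0 by (simp add: span_zero)
      have "0 \<le> i + - j" using 2 k.prems(1) by simp
      hence t2: "\<rho> (br x y) (i + - j) w \<in> H 0"
        using A 2 by blast
      have t3: "(if i + - j = 0 then sv (of_int i * B x y) w else 0) \<in> H 0"
        using 2 subspace_scale[OF H_sub] subspace_0[OF H_sub] by (simp del: Hf.simps)
      have eq: "\<rho> x i s = \<rho> y (- j) (\<rho> x i w) + \<rho> (br x y) (i + - j) w
          + (if i + - j = 0 then sv (of_int i * B x y) w else 0)"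
        unfolding 2 by (rule comm')
      show ?thesis unfolding eq
        by (intro subspace_add H_sub t1 t2 t3)
    qed
  qed
next
  case (Suc k)
  have i: "0 \<le> i" using Suc.prems N1 by simp
  show ?case
  proof (rule lin_pre[OF H_sub _ H_SucD[OF Suc.prems(2)]])
    fix s assume "s \<in> H (Suc k) \<union> {\<rho> x (- j) w | x j w. 0 < j \<and> j \<le> int N \<and> w \<in> H (Suc k)}"
    then consider "s \<in> H (Suc k)" | y j w where "s = \<rho> y (- j) w" "0 < j" "j \<le> int N" "w \<in> H (Suc k)"
      by blast
    then show "\<rho> x i s \<in> H (Suc k)"
    proof cases
      case 1 then show ?thesis using A i by blast
    next
      case 2
      have t1: "\<rho> y (- j) (\<rho> x i w) \<in> H (Suc k)"
        using H_gen 2 Suc.IH[OF Suc.prems(1) 2(4)] by blast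
      have "0 \<le> i + - j" using 2 Suc.prems(1) by simp
      hence t2: "\<rho> (br x y) (i + - j) w \<in> H (Suc k)"
        using A 2 by blast
      have t3: "(if i + - j = 0 then sv (of_int i * B x y) w else 0) \<in> H (Suc k)"
        using 2 subspace_scale[OF H_sub] subspace_0[OF H_sub] by (simp del: Hf.simps)
      have eq: "\<rho> x i s = \<rho> y (- j) (\<rho> x i w) + \<rho> (br x y) (i + - j) w
          + (if i + - j = 0 then sv (of_int i * B x y) w else 0)"
        unfolding 2 by (rule comm')
      show ?thesis unfolding eq
        by (intro subspace_add H_sub t1 t2 t3)
    qed
  qed
qed

lemma C: "((\<rho> e (- int N)) ^^ n) v0 \<in> H n"
proof (induction n)
  case 0 then show ?case by (simp add: span_base)
next
  case (Suc n)
  then show ?case using H_gen[of "int N"] N1 by simp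
qed



lemma D: "v \<in> H N \<Longrightarrow> cyclic_pos sv \<rho> v \<subseteq> H N"
  unfolding cyclic_pos_def using A by (intro Inter_lower) auto

lemma cyc_subspace: "subspace (cyclic_pos sv \<rho> v)"
  unfolding cyclic_pos_def by (rule subspace_Inter) auto

lemma cyc_stable: "0 \<le> i \<Longrightarrow> w \<in> cyclic_pos sv \<rho> v \<Longrightarrow> \<rho> x i w \<in> cyclic_pos sv \<rho> v"
  unfolding cyclic_pos_def by auto

lemma Fl: "tN_filt sv \<rho> N v m \<subseteq> cyclic_pos sv \<rho> v"
proof (induction m)
  case 0 then show ?case by simp
next
  case (Suc m)
  show ?case unfolding tN_filt.simps
    by (rule span_minimal[OF _ cyc_subspace]) (use Suc cyc_stable N1 in force)
qed

lemma El: "v \<in> H N \<Longrightarrow> m \<le> N \<Longrightarrow> tN_filt sv \<rho> N v m \<subseteq> H (N - m)"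
proof (induction m)
  case 0 then show ?case using D by simp
next
  case (Suc m)
  have "N - m = Suc (N - Suc m)" using Suc.prems by simp
  hence "\<rho> x i w \<in> H (N - Suc m)" if "int N \<le> i" "w \<in> tN_filt sv \<rho> N v m" for x i w
    using Bl[OF that(1)] Suc that by auto
  then show ?case unfolding tN_filt.simps
    by (intro span_minimal H_sub) auto
qed

lemma Hpbw: "H k \<subseteq> pbw_filt sv \<rho> v0 k"
proof (induction k)
  case 0 then show ?case by simp
next
  case (Suc k)
  then show ?case by (simp only: Hf.simps pbw_filt.simps) (intro span_mono, fastforce)
qed

end

theorem lemma4p3:
  fixes sg :: "complex \<Rightarrow> 'g::ab_group_add \<Rightarrow> 'g"
    and br :: "'g \<Rightarrow> 'g \<Rightarrow> 'g"
    and B :: "'g \<Rightarrow> 'g \<Rightarrow> complex"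
    and e :: 'g
    and sv :: "complex \<Rightarrow> 'v::ab_group_add \<Rightarrow> 'v"
    and \<rho> :: "'g \<Rightarrow> int \<Rightarrow> 'v \<Rightarrow> 'v"
    and v0 :: 'v
    and N m :: nat
  assumes "simple_lie_algebra sg br"
    and "highest_root_vector sg br e"
    and "normalized_form sg br B e"
    and "basic_rep sg br B sv \<rho> v0"
    and "1 \<le> N"
    and "m \<le> N"
  shows "tN_filt sv \<rho> N (vN \<rho> e N v0) m
           \<subseteq> cyclic_pos sv \<rho> (vN \<rho> e N v0) \<inter> pbw_filt sv \<rho> v0 (N - m)"
proof -
  have "lvl sv \<rho> br B v0 N"
    using assms(4,5) unfolding lvl_def lvl_axioms_def basic_rep_def level_one_module_def
    by auto
  then interpret lvl sv \<rho> br B v0 N .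
  have v: "vN \<rho> e N v0 \<in> H N" unfolding vN_def by (rule C)
  show ?thesis using Fl El[OF v assms(6)] Hpbw by blast
qed

end
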